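(* Let $p$ be a prime, $R$ a Noetherian $\mathbb{F}_p$-algebra and $(\sigma,\delta)$ a skew derivation on $R$ with $\sigma\delta=\delta\sigma$. If $i,j,k,n\in\mathbb{N}$ satisfy $[i]+[j]+[k]=[n]$, then $i+j+k=n$. Furthermore, for any $a,b,x\in R$ and $n\in\mathbb{N}$, there exist $\alpha_{i,j,k}\in\mathbb{F}_p^\times$ such that $$\delta^n(axb)=\sum_{[i]+[j]+[k]=[n]}\alpha_{i,j,k}\,\delta^i\sigma^{n-i}(a)\,\delta^j\sigma^k(x)\,\delta^k(b).$$
   Context: A skew derivation is a pair $(\sigma,\delta)$ with $\sigma$ an automorphism and $\delta(ab)=\delta(a)b+\sigma(a)\delta(b)$; composition is written as concatenation. For $n\in\mathbb{N}$ with base-$p$ expansion $n=a_0+a_1p+\cdots+a_rp^r$ ($0\le a_i<p$), $[n]=[n]_p$ denotes the sequence $(a_0,a_1,\dots)\in\mathbb{N}^\infty$ with $a_i=0$ for $i>r$; sums $[i]+[j]+[k]$ are taken componentwise, and the sum in the formula runs over all triples $(i,j,k)$ with $[i]+[j]+[k]=[n]$. *)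

theory Defs
  imports Main "HOL-Computational_Algebra.Primes"
begin

definition pdigit :: "nat \<Rightarrow> nat \<Rightarrow> nat \<Rightarrow> nat" where
  "pdigit p n t = (n div p ^ t) mod p"

definition digit_split :: "nat \<Rightarrow> nat \<Rightarrow> nat \<Rightarrow> nat \<Rightarrow> nat \<Rightarrow> bool" where
  "digit_split p i j k n \<longleftrightarrow> (\<forall>t. pdigit p i t + pdigit p j t + pdigit p k t = pdigit p n t)"

definition left_ideal :: "'a::ring_1 set \<Rightarrow> bool" where
  "left_ideal I \<longleftrightarrow> 0 \<in> I \<and> (\<forall>x\<in>I. \<forall>y\<in>I. x + y \<in> I) \<and> (\<forall>r. \<forall>x\<in>I. r * x \<in> I)"

definition right_ideal :: "'a::ring_1 set \<Rightarrow> bool" where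
  "right_ideal I \<longleftrightarrow> 0 \<in> I \<and> (\<forall>x\<in>I. \<forall>y\<in>I. x + y \<in> I) \<and> (\<forall>r. \<forall>x\<in>I. x * r \<in> I)"

definition noetherian_ring :: "'a::ring_1 itself \<Rightarrow> bool" where
  "noetherian_ring _ \<longleftrightarrow>
     (\<forall>I::nat \<Rightarrow> 'a set. (\<forall>m. left_ideal (I m)) \<and> (\<forall>m. I m \<subseteq> I (Suc m)) \<longrightarrow> (\<exists>m. \<forall>n\<ge>m. I n = I m)) \<and>
     (\<forall>I::nat \<Rightarrow> 'a set. (\<forall>m. right_ideal (I m)) \<and> (\<forall>m. I m \<subseteq> I (Suc m)) \<longrightarrow> (\<exists>m. \<forall>n\<ge>m. I n = I m))"

definition ring_automorphism :: "('a::ring_1 \<Rightarrow> 'a) \<Rightarrow> bool" where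
  "ring_automorphism \<sigma> \<longleftrightarrow> bij \<sigma> \<and> (\<forall>a b. \<sigma> (a + b) = \<sigma> a + \<sigma> b) \<and>
     (\<forall>a b. \<sigma> (a * b) = \<sigma> a * \<sigma> b) \<and> \<sigma> 1 = 1"

definition skew_derivation :: "('a::ring_1 \<Rightarrow> 'a) \<Rightarrow> ('a \<Rightarrow> 'a) \<Rightarrow> bool" where
  "skew_derivation \<sigma> \<delta> \<longleftrightarrow> ring_automorphism \<sigma> \<and> (\<forall>a b. \<delta> (a + b) = \<delta> a + \<delta> b) \<and>
     (\<forall>a b. \<delta> (a * b) = \<delta> a * b + \<sigma> a * \<delta> b)"

end

theory Submission
  imports Defs
begin


definition addf :: "('a::ring_1 \<Rightarrow> 'a) \<Rightarrow> bool" where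
  "addf f \<longleftrightarrow> (\<forall>a b. f (a + b) = f a + f b)"

lemma addf_0: "addf f \<Longrightarrow> f 0 = 0"
  unfolding addf_def by (metis add_cancel_right_right add_0)

lemma addf_sum: assumes "addf f" shows "f (sum g A) = (\<Sum>x\<in>A. f (g x))"
proof (cases "finite A")
  case True then show ?thesis
    by (induction A rule: finite_induct) (use assms in \<open>auto simp: addf_0 addf_def\<close>)
qed (simp add: addf_0 assms)

lemma addf_nat: assumes "addf f" shows "f (of_nat c * z) = of_nat c * f z"
  by (induction c) (use assms in \<open>auto simp: addf_0 addf_def distrib_right\<close>)

lemma addf_funpow: "addf f \<Longrightarrow> addf (f ^^ n)"
  by (induction n) (auto simp: addf_def)

definition skd :: "('a::ring_1 \<Rightarrow> 'a) \<Rightarrow> ('a \<Rightarrow> 'a) \<Rightarrow> bool" where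
  "skd \<sigma> \<delta> \<longleftrightarrow> addf \<sigma> \<and> (\<forall>a b. \<sigma> (a * b) = \<sigma> a * \<sigma> b) \<and> addf \<delta> \<and>
     (\<forall>a b. \<delta> (a * b) = \<delta> a * b + \<sigma> a * \<delta> b) \<and> (\<forall>y. \<sigma> (\<delta> y) = \<delta> (\<sigma> y))"

lemma fa: "(f ^^ m) ((f ^^ n) x) = (f ^^ (m + n)) x"
  by (simp add: funpow_add)

lemma comm1: assumes "\<And>y. s (d y) = d (s y)" shows "s ((d ^^ b) y) = (d ^^ b) (s y)"
  by (induction b) (auto simp: assms)

lemma commn: assumes "\<And>y. s (d y) = d (s y)" shows "(s ^^ a) ((d ^^ b) y) = (d ^^ b) ((s ^^ a) y)"
  by (induction a) (auto simp: comm1[where s=s and d=d, OF assms])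

lemma mult_funpow: fixes s :: "'a::times \<Rightarrow> 'a" assumes "\<And>a b. s (a * b) = s a * s b" shows "(s ^^ n) (a * b) = (s ^^ n) a * (s ^^ n) b"
  by (induction n) (simp_all add: assms)

lemma pascal_sum:
  fixes G :: "nat \<Rightarrow> 'a::ring_1"
  shows "(\<Sum>k\<le>n. of_nat (n choose k) * (G k + G (Suc k))) = (\<Sum>k\<le>Suc n. of_nat (Suc n choose k) * G k)"
proof -
  have "(\<Sum>k\<le>Suc n. of_nat (Suc n choose k) * G k) = G 0 + (\<Sum>k\<le>n. of_nat (Suc n choose Suc k) * G (Suc k))"
    by (subst sum.atMost_Suc_shift) simp
  also have "\<dots> = G 0 + (\<Sum>k\<le>n. of_nat (n choose k) * G (Suc k)) + (\<Sum>k\<le>n. of_nat (n choose Suc k) * G (Suc k))"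
    by (simp add: sum.distrib distrib_right add.assoc)
  also have "(\<Sum>k\<le>n. of_nat (n choose k) * G k) = G 0 + (\<Sum>k\<le>n. of_nat (n choose Suc k) * G (Suc k))"
  proof (cases n)
    case 0 then show ?thesis by simp
  next
    case (Suc n')
    have "(\<Sum>k\<le>n. of_nat (n choose k) * G k) = G 0 + (\<Sum>k\<le>n'. of_nat (n choose Suc k) * G (Suc k))"
      unfolding Suc by (subst sum.atMost_Suc_shift) simp
    also have "(\<Sum>k\<le>n'. of_nat (n choose Suc k) * G (Suc k)) = (\<Sum>k\<le>n. of_nat (n choose Suc k) * G (Suc k))"
      by (simp add: Suc binomial_eq_0)
    finally show ?thesis .
  qed
  ultimately show ?thesis
    by (simp add: distrib_left sum.distrib add_ac)
qed

lemma bin: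
  assumes "skd \<sigma> \<delta>"
  shows "(\<delta> ^^ n) (a * b) = (\<Sum>k\<le>n. of_nat (n choose k) * ((\<delta> ^^ (n - k)) ((\<sigma> ^^ k) a) * (\<delta> ^^ k) b))"
proof (induction n)
  case 0 then show ?case by simp
next
  case (Suc n)
  have ad: "addf \<delta>" and L: "\<And>a b. \<delta> (a * b) = \<delta> a * b + \<sigma> a * \<delta> b"
    and C: "\<And>y. \<sigma> (\<delta> y) = \<delta> (\<sigma> y)" using assms by (auto simp: skd_def)
  define G where "G k = (\<delta> ^^ (Suc n - k)) ((\<sigma> ^^ k) a) * (\<delta> ^^ k) b" for k
  have D: "\<delta> ((\<delta> ^^ (n - k)) ((\<sigma> ^^ k) a) * (\<delta> ^^ k) b) = G k + G (Suc k)" if "k \<le> n" for k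
  proof -
    have "Suc n - k = Suc (n - k)" using that by simp
    then show ?thesis unfolding G_def L
      by (simp add: comm1[of \<sigma> \<delta>, OF C])
  qed
  have "(\<delta> ^^ Suc n) (a * b) = \<delta> ((\<delta> ^^ n) (a * b))" by simp
  also have "\<dots> = (\<Sum>k\<le>n. of_nat (n choose k) * (G k + G (Suc k)))"
    unfolding Suc addf_sum[OF ad] addf_nat[OF ad] using D by simp
  also have "\<dots> = (\<Sum>k\<le>Suc n. of_nat (Suc n choose k) * G k)" by (rule pascal_sum)
  finally show ?case unfolding G_def .
qed

lemma skd_pow:
  assumes p: "prime p" and c: "of_nat p = (0::'a::ring_1)" and s: "skd \<sigma> (\<delta>::'a \<Rightarrow> 'a)"
  shows "skd (\<sigma> ^^ p) (\<delta> ^^ p)"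
proof -
  have as: "addf \<sigma>" and ms: "\<And>a b. \<sigma> (a * b) = \<sigma> a * \<sigma> b" and ad: "addf \<delta>"
    and C: "\<And>y. \<sigma> (\<delta> y) = \<delta> (\<sigma> y)" using s by (auto simp: skd_def)
  have p0: "p \<noteq> 0" using p by auto
  have L: "(\<delta> ^^ p) (a * b) = (\<delta> ^^ p) a * b + (\<sigma> ^^ p) a * (\<delta> ^^ p) b" for a b
  proof -
    have "(\<delta> ^^ p) (a * b) = (\<Sum>k\<le>p. of_nat (p choose k) * ((\<delta> ^^ (p - k)) ((\<sigma> ^^ k) a) * (\<delta> ^^ k) b))"
      by (rule bin[OF s])
    also have "\<dots> = (\<Sum>k\<in>{0,p}. of_nat (p choose k) * ((\<delta> ^^ (p - k)) ((\<sigma> ^^ k) a) * (\<delta> ^^ k) b))"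
    proof (rule sum.mono_neutral_right)
      show "\<forall>k\<in>{..p} - {0, p}. of_nat (p choose k) * ((\<delta> ^^ (p - k)) ((\<sigma> ^^ k) a) * (\<delta> ^^ k) b) = 0"
      proof
        fix k assume k: "k \<in> {..p} - {0, p}"
        then have "p dvd (p choose k)" using dvd_choose_prime[of k p] p p0 by auto
        then obtain q where "p choose k = p * q" by blast
        then have "of_nat (p choose k) = (0::'a)" by (simp add: c)
        then show "of_nat (p choose k) * ((\<delta> ^^ (p - k)) ((\<sigma> ^^ k) a) * (\<delta> ^^ k) b) = 0" by simp
      qed
    qed auto
    also have "\<dots> = (\<delta> ^^ p) a * b + (\<sigma> ^^ p) a * (\<delta> ^^ p) b" using p0 by simp
    finally show ?thesis .
  qed
  show ?thesis unfolding skd_def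
    using addf_funpow[OF as] addf_funpow[OF ad] mult_funpow[of \<sigma>, OF ms] L
      commn[where s=\<sigma> and d=\<delta>, OF C]
    by (simp add: funpow_swap1)
qed

definition G3 :: "nat \<Rightarrow> (nat \<times> nat \<times> nat) set" where "G3 r = {(i, j, k). i + j + k = r}"
definition cf :: "nat \<Rightarrow> nat \<times> nat \<times> nat \<Rightarrow> nat" where
  "cf r t = (case t of (i, j, k) \<Rightarrow> (r choose k) * ((r - k) choose j))"
definition trm :: "('a::ring_1 \<Rightarrow> 'a) \<Rightarrow> ('a \<Rightarrow> 'a) \<Rightarrow> nat \<Rightarrow> 'a \<Rightarrow> 'a \<Rightarrow> 'a \<Rightarrow> nat \<times> nat \<times> nat \<Rightarrow> 'a" where
  "trm \<sigma> \<delta> n a x b t = (case t of (i, j, k) \<Rightarrow> (\<delta> ^^ i) ((\<sigma> ^^ (n - i)) a) * (\<delta> ^^ j) ((\<sigma> ^^ k) x) * (\<delta> ^^ k) b)"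

lemma reidx: "(\<Sum>k\<le>r. \<Sum>l\<le>r - k. h (r - k - l, l, k)) = (\<Sum>t\<in>G3 r. h t)"
proof -
  have "(\<Sum>k\<le>r. \<Sum>l\<le>r - k. h (r - k - l, l, k)) = (\<Sum>(k, l)\<in>Sigma {..r} (\<lambda>k. {..r - k}). h (r - k - l, l, k))"
    by (rule sum.Sigma) auto
  also have "\<dots> = (\<Sum>t\<in>G3 r. h t)"
    by (rule sum.reindex_bij_witness[where i="\<lambda>(i, j, k). (k, j)" and j="\<lambda>(k, l). (r - k - l, l, k)"])
       (auto simp: G3_def)
  finally show ?thesis .
qed

lemma tri:
  assumes s: "skd \<sigma> \<delta>"
  shows "(\<delta> ^^ r) (u * v * w) = (\<Sum>t\<in>G3 r. of_nat (cf r t) * trm \<sigma> \<delta> r u v w t)"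
proof -
  have ms: "\<And>a b. \<sigma> (a * b) = \<sigma> a * \<sigma> b" using s by (auto simp: skd_def)
  have "(\<delta> ^^ r) (u * v * w) = (\<Sum>k\<le>r. of_nat (r choose k) * ((\<delta> ^^ (r - k)) ((\<sigma> ^^ k) (u * v)) * (\<delta> ^^ k) w))"
    by (rule bin[OF s])
  also have "\<dots> = (\<Sum>k\<le>r. \<Sum>l\<le>r - k. of_nat (cf r (r - k - l, l, k)) * trm \<sigma> \<delta> r u v w (r - k - l, l, k))"
  proof (rule sum.cong[OF refl])
    fix k assume k: "k \<in> {..r}"
    have "(\<delta> ^^ (r - k)) ((\<sigma> ^^ k) (u * v)) = (\<Sum>l\<le>r - k. of_nat (r - k choose l) *
       ((\<delta> ^^ (r - k - l)) ((\<sigma> ^^ l) ((\<sigma> ^^ k) u)) * (\<delta> ^^ l) ((\<sigma> ^^ k) v)))"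
      unfolding mult_funpow[of \<sigma>, OF ms] by (rule bin[OF s])
    then show "of_nat (r choose k) * ((\<delta> ^^ (r - k)) ((\<sigma> ^^ k) (u * v)) * (\<delta> ^^ k) w) =
       (\<Sum>l\<le>r - k. of_nat (cf r (r - k - l, l, k)) * trm \<sigma> \<delta> r u v w (r - k - l, l, k))"
      using k
      by (simp add: sum_distrib_left sum_distrib_right cf_def trm_def fa mult.assoc
          of_nat_mult add.commute)
  qed
  also have "\<dots> = (\<Sum>t\<in>G3 r. of_nat (cf r t) * trm \<sigma> \<delta> r u v w t)"
    by (rule reidx)
  finally show ?thesis .
qed


lemma pdigit_0: "pdigit p n 0 = n mod p" by (simp add: pdigit_def)
lemma pdigit_Suc: "pdigit p n (Suc t) = pdigit p (n div p) t"
  by (simp add: pdigit_def div_mult2_eq)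

lemma ds_iff: "digit_split p i j k n \<longleftrightarrow>
   i mod p + j mod p + k mod p = n mod p \<and> digit_split p (i div p) (j div p) (k div p) (n div p)"
proof -
  have A: "(\<forall>t. Q t) \<longleftrightarrow> Q 0 \<and> (\<forall>t. Q (Suc t))" for Q :: "nat \<Rightarrow> bool"
    by (metis not0_implies_Suc)
  show ?thesis unfolding digit_split_def
    by (subst A) (simp add: pdigit_0 pdigit_Suc)
qed

lemma zero_digits: assumes "1 < p" "\<forall>t. pdigit p i t = 0" shows "i = 0"
  using assms(2)
proof (induction i rule: less_induct)
  case (less i)
  show ?case
  proof (rule ccontr)
    assume "i \<noteq> 0"
    then have "i div p < i" using assms(1) by simp
    moreover have "\<forall>t. pdigit p (i div p) t = 0" using less.prems by (simp add: pdigit_Suc[symmetric])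
    ultimately have "i div p = 0" using less.IH by blast
    moreover have "i mod p = 0" using less.prems[rule_format, of 0] by (simp add: pdigit_0)
    ultimately show False using \<open>i \<noteq> 0\<close> div_mult_mod_eq[of i p] by simp
  qed
qed

lemma sum3: "(a::nat) = A * p + a' \<Longrightarrow> b = B * p + b' \<Longrightarrow> c = C * p + c' \<Longrightarrow>
  a + b + c = (A + B + C) * p + (a' + b' + c')"
  by (simp add: algebra_simps)

lemma part1: assumes "1 < p" shows "digit_split p i j k n \<Longrightarrow> i + j + k = n"
proof (induction n arbitrary: i j k rule: less_induct)
  case (less n)
  show ?case
  proof (cases "n = 0")
    case True
    then have "\<forall>t. pdigit p i t = 0 \<and> pdigit p j t = 0 \<and> pdigit p k t = 0"
      using less.prems by (auto simp: digit_split_def pdigit_def)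
    then have "i = 0" "j = 0" "k = 0" using zero_digits[OF assms] by auto
    then show ?thesis using True by simp
  next
    case False
    then have "n div p < n" using assms by simp
    then have dv: "i div p + j div p + k div p = n div p"
      using less.IH less.prems ds_iff by blast
    have "i mod p + j mod p + k mod p = n mod p" using less.prems ds_iff by blast
    have "i + j + k = (i div p + j div p + k div p) * p + (i mod p + j mod p + k mod p)"
      using sum3[OF div_mult_mod_eq[of i p, symmetric] div_mult_mod_eq[of j p, symmetric] div_mult_mod_eq[of k p, symmetric]] .
    also have "\<dots> = n" using dv \<open>i mod p + j mod p + k mod p = n mod p\<close> by simp
    finally show ?thesis .
  qed
qed

lemma not_dvd_choose: assumes "prime p" "m < p" "k \<le> m" shows "\<not> p dvd (m choose k)"
proof
  assume "p dvd (m choose k)"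
  then have "p dvd fact m" using binomial_fact_lemma[OF assms(3)] by (metis dvd_mult)
  then show False using prime_dvd_fact_iff[OF assms(1)] assms(2) by simp
qed

lemma cf_ndvd: assumes "prime p" "r < p" "i + j + k = r" shows "\<not> p dvd cf r (i, j, k)"
  using assms not_dvd_choose[of p r k] not_dvd_choose[of p "r - k" j]
  by (auto simp: cf_def prime_dvd_mult_iff)

lemma of_nat_modp: assumes "of_nat p = (0::'a::ring_1)" shows "(of_nat (q mod p) :: 'a) = of_nat q"
proof -
  have "(of_nat q :: 'a) = of_nat (q div p * p + q mod p)" by simp
  also have "\<dots> = of_nat (q mod p)" by (simp only: of_nat_add of_nat_mult assms) simp
  finally show ?thesis by simp
qed

lemma trm_comp:
  assumes s: "skd \<sigma> \<delta>" and h: "i' + j' + k' = m" "i0 + j0 + k0 = r" "n = r + p * m"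
  shows "trm \<sigma> \<delta> r (((\<delta> ^^ p) ^^ i') (((\<sigma> ^^ p) ^^ (m - i')) a)) (((\<delta> ^^ p) ^^ j') (((\<sigma> ^^ p) ^^ k') x))
     (((\<delta> ^^ p) ^^ k') b) (i0, j0, k0) = trm \<sigma> \<delta> n a x b (i0 + p * i', j0 + p * j', k0 + p * k')"
proof -
  have C: "\<And>y. \<sigma> (\<delta> y) = \<delta> (\<sigma> y)" using s by (auto simp: skd_def)
  have e: "r - i0 + p * (m - i') = n - (i0 + p * i')"
    using h by (simp add: diff_mult_distrib2 algebra_simps)
  have 1: "(\<delta> ^^ i0) ((\<sigma> ^^ (r - i0)) ((\<delta> ^^ (p * i')) ((\<sigma> ^^ (p * (m - i'))) a)))
      = (\<delta> ^^ (i0 + p * i')) ((\<sigma> ^^ (n - (i0 + p * i'))) a)"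
    unfolding commn[where s=\<sigma> and d=\<delta>, OF C] fa e ..
  have 2: "(\<delta> ^^ j0) ((\<sigma> ^^ k0) ((\<delta> ^^ (p * j')) ((\<sigma> ^^ (p * k')) x)))
      = (\<delta> ^^ (j0 + p * j')) ((\<sigma> ^^ (k0 + p * k')) x)"
    unfolding commn[where s=\<sigma> and d=\<delta>, OF C] fa ..
  have 3: "(\<delta> ^^ k0) ((\<delta> ^^ (p * k')) b) = (\<delta> ^^ (k0 + p * k')) b"
    unfolding fa ..
  show ?thesis unfolding trm_def funpow_mult prod.case 1 2 3 ..
qed


definition DS :: "nat \<Rightarrow> nat \<Rightarrow> (nat \<times> nat \<times> nat) set" where
  "DS p n = {(i, j, k). digit_split p i j k n}"

lemma mem_DS: "(i, j, k) \<in> DS p n \<longleftrightarrow> digit_split p i j k n" by (simp add: DS_def)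

lemma main:
  assumes p: "prime p" and c: "of_nat p = (0::'a::ring_1)"
  shows "\<forall>\<sigma> (\<delta>::'a \<Rightarrow> 'a). skd \<sigma> \<delta> \<longrightarrow> (\<exists>\<alpha>. (\<forall>t\<in>DS p n. 0 < \<alpha> t \<and> \<alpha> t < p) \<and>
     (\<delta> ^^ n) (a * x * b) = (\<Sum>t\<in>DS p n. of_nat (\<alpha> t) * trm \<sigma> \<delta> n a x b t))"
proof (induction n rule: less_induct)
  case (less n)
  have p1: "1 < p" by (rule prime_gt_1_nat[OF p])
  show ?case
  proof (intro allI impI)
    fix \<sigma> \<delta> :: "'a \<Rightarrow> 'a" assume s: "skd \<sigma> \<delta>"
    show "\<exists>\<alpha>. (\<forall>t\<in>DS p n. 0 < \<alpha> t \<and> \<alpha> t < p) \<and>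
     (\<delta> ^^ n) (a * x * b) = (\<Sum>t\<in>DS p n. of_nat (\<alpha> t) * trm \<sigma> \<delta> n a x b t)"
    proof (cases "n = 0")
      case True
      have D: "DS p n = {(0, 0, 0)}"
      proof
        show "DS p n \<subseteq> {(0, 0, 0)}"
        proof
          fix t assume t: "t \<in> DS p n"
          obtain i j k where tt: "t = (i, j, k)" by (cases t) auto
          have "i + j + k = 0" using part1[OF p1, of i j k n] t True by (simp add: tt mem_DS)
          then show "t \<in> {(0, 0, 0)}" by (simp add: tt)
        qed
        show "{(0, 0, 0)} \<subseteq> DS p n" by (simp add: True mem_DS digit_split_def pdigit_def)
      qed
      show ?thesis unfolding D
        by (rule exI[of _ "\<lambda>_. 1"]) (use p1 in \<open>simp add: True trm_def\<close>)
    next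
      case False
      define m where "m = n div p"
      define r where "r = n mod p"
      have mn: "m < n" using False p1 by (simp add: m_def)
      have nrm: "n = r + p * m" by (simp add: m_def r_def)
      have rp: "r < p" using p1 by (simp add: r_def)
      obtain \<alpha>' where A1: "\<forall>t\<in>DS p m. 0 < \<alpha>' t \<and> \<alpha>' t < p"
        and A2: "((\<delta> ^^ p) ^^ m) (a * x * b) = (\<Sum>t\<in>DS p m. of_nat (\<alpha>' t) * trm (\<sigma> ^^ p) (\<delta> ^^ p) m a x b t)"
        using less.IH[OF mn] skd_pow[OF p c s] by blast
      define comb :: "(nat \<times> nat \<times> nat) \<times> (nat \<times> nat \<times> nat) \<Rightarrow> nat \<times> nat \<times> nat" where
        "comb = (\<lambda>((i', j', k'), (i0, j0, k0)). (i0 + p * i', j0 + p * j', k0 + p * k'))"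
      define dec :: "nat \<times> nat \<times> nat \<Rightarrow> (nat \<times> nat \<times> nat) \<times> (nat \<times> nat \<times> nat)" where
        "dec = (\<lambda>(i, j, k). ((i div p, j div p, k div p), (i mod p, j mod p, k mod p)))"
      define \<alpha> where "\<alpha> t = (case dec t of (y, z) \<Rightarrow> (\<alpha>' y * cf r z) mod p)" for t
      have ad: "addf (\<delta> ^^ r)" using s addf_funpow by (auto simp: skd_def)
      have "(\<delta> ^^ n) (a * x * b) = (\<delta> ^^ r) (((\<delta> ^^ p) ^^ m) (a * x * b))"
        unfolding funpow_mult nrm fa ..
      also have "\<dots> = (\<Sum>y\<in>DS p m. of_nat (\<alpha>' y) * (\<delta> ^^ r) (trm (\<sigma> ^^ p) (\<delta> ^^ p) m a x b y))"
        unfolding A2 addf_sum[OF ad] addf_nat[OF ad] ..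
      also have "\<dots> = (\<Sum>y\<in>DS p m. \<Sum>z\<in>G3 r. of_nat (\<alpha>' y * cf r z) * trm \<sigma> \<delta> n a x b (comb (y, z)))"
      proof (rule sum.cong[OF refl])
        fix y assume y: "y \<in> DS p m"
        obtain i' j' k' where yy: "y = (i', j', k')" by (cases y) auto
        have sm: "i' + j' + k' = m" using y part1[OF p1] by (simp add: yy mem_DS)
        define U where "U = ((\<delta> ^^ p) ^^ i') (((\<sigma> ^^ p) ^^ (m - i')) a)"
        define V where "V = ((\<delta> ^^ p) ^^ j') (((\<sigma> ^^ p) ^^ k') x)"
        define W where "W = ((\<delta> ^^ p) ^^ k') b"
        have tU: "trm (\<sigma> ^^ p) (\<delta> ^^ p) m a x b y = U * V * W" by (simp add: yy trm_def U_def V_def W_def)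
        have eq: "of_nat (\<alpha>' y) * (of_nat (cf r z) * trm \<sigma> \<delta> r U V W z) =
            of_nat (\<alpha>' y * cf r z) * trm \<sigma> \<delta> n a x b (comb (y, z))" if z: "z \<in> G3 r" for z
        proof -
          obtain i0 j0 k0 where zz: "z = (i0, j0, k0)" by (cases z) auto
          have sz: "i0 + j0 + k0 = r" using z by (simp add: zz G3_def)
          show ?thesis
            unfolding zz U_def V_def W_def trm_comp[OF s sm sz nrm] by (simp add: comb_def yy mult.assoc)
        qed
        show "of_nat (\<alpha>' y) * (\<delta> ^^ r) (trm (\<sigma> ^^ p) (\<delta> ^^ p) m a x b y) =
           (\<Sum>z\<in>G3 r. of_nat (\<alpha>' y * cf r z) * trm \<sigma> \<delta> n a x b (comb (y, z)))"
          unfolding tU tri[OF s] sum_distrib_left using eq by (rule sum.cong[OF refl])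
      qed
      also have "\<dots> = (\<Sum>(y, z)\<in>DS p m \<times> G3 r. of_nat (\<alpha>' y * cf r z) * trm \<sigma> \<delta> n a x b (comb (y, z)))"
        by (rule sum.cartesian_product)
      also have "\<dots> = (\<Sum>t\<in>DS p n. of_nat (\<alpha> t) * trm \<sigma> \<delta> n a x b t)"
      proof (rule sum.reindex_bij_witness[where i=dec and j=comb])
        fix w assume w: "w \<in> DS p m \<times> G3 r"
        obtain i' j' k' i0 j0 k0 where ww: "w = ((i', j', k'), (i0, j0, k0))" by (cases w) auto
        have sz: "i0 + j0 + k0 = r" and ds: "digit_split p i' j' k' m" using w by (auto simp: ww G3_def mem_DS)
        have lt: "i0 < p" "j0 < p" "k0 < p" using sz rp by auto
        show H1: "dec (comb w) = w" using lt by (simp add: ww comb_def dec_def)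
        show "comb w \<in> DS p n" unfolding ww comb_def mem_DS prod.case
          apply (subst ds_iff) using lt sz ds by (simp add: r_def m_def)
        show "of_nat (\<alpha> (comb w)) * trm \<sigma> \<delta> n a x b (comb w) =
          (case w of (y, z) \<Rightarrow> of_nat (\<alpha>' y * cf r z) * trm \<sigma> \<delta> n a x b (comb (y, z)))"
          unfolding \<alpha>_def H1 by (simp add: ww of_nat_modp[OF c])
      next
        fix t assume t: "t \<in> DS p n"
        obtain i j k where tt: "t = (i, j, k)" by (cases t) auto
        have ds: "digit_split p i j k n" using t by (simp add: tt mem_DS)
        show "comb (dec t) = t" by (simp add: tt comb_def dec_def)
        show "dec t \<in> DS p m \<times> G3 r" using ds ds_iff[of p i j k n]
          by (simp add: tt dec_def mem_DS G3_def m_def r_def)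
      qed
      finally have E: "(\<delta> ^^ n) (a * x * b) = (\<Sum>t\<in>DS p n. of_nat (\<alpha> t) * trm \<sigma> \<delta> n a x b t)" .
      have P: "0 < \<alpha> t \<and> \<alpha> t < p" if t: "t \<in> DS p n" for t
      proof -
        obtain i j k where tt: "t = (i, j, k)" by (cases t) auto
        have ds: "digit_split p i j k n" using t by (simp add: tt mem_DS)
        have d1: "(i div p, j div p, k div p) \<in> DS p m" and d2: "i mod p + j mod p + k mod p = r"
          using ds ds_iff[of p i j k n] by (auto simp: mem_DS m_def r_def)
        have "\<not> p dvd \<alpha>' (i div p, j div p, k div p)" 
        proof
          assume "p dvd \<alpha>' (i div p, j div p, k div p)"
          moreover have "0 < \<alpha>' (i div p, j div p, k div p)" "\<alpha>' (i div p, j div p, k div p) < p"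
            using A1 d1 by auto
          ultimately show False using dvd_imp_le by fastforce
        qed
        moreover have "\<not> p dvd cf r (i mod p, j mod p, k mod p)" by (rule cf_ndvd[OF p rp d2])
        ultimately have "\<not> p dvd (\<alpha>' (i div p, j div p, k div p) * cf r (i mod p, j mod p, k mod p))"
          using p by (simp add: prime_dvd_mult_iff)
        then show ?thesis using p1 by (simp add: \<alpha>_def tt dec_def dvd_eq_mod_eq_0)
      qed
      show ?thesis using E P by blast
    qed
  qed
qed


theorem lemma3p2p2:
  fixes p :: nat and \<sigma> \<delta> :: "'a::ring_1 \<Rightarrow> 'a"
  assumes "prime p"
    and "of_nat p = (0::'a)"
    and "noetherian_ring TYPE('a)"
    and "skew_derivation \<sigma> \<delta>"
    and "\<sigma> \<circ> \<delta> = \<delta> \<circ> \<sigma>"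
  shows "(\<forall>i j k n. digit_split p i j k n \<longrightarrow> i + j + k = n) \<and>
    (\<forall>(a::'a) b x n. \<exists>\<alpha> :: nat \<Rightarrow> nat \<Rightarrow> nat \<Rightarrow> nat.
       (\<forall>i j k. digit_split p i j k n \<longrightarrow> 0 < \<alpha> i j k \<and> \<alpha> i j k < p) \<and>
       (\<delta> ^^ n) (a * x * b) =
         (\<Sum>(i, j, k) \<in> {(i, j, k). i \<le> n \<and> j \<le> n \<and> k \<le> n \<and> digit_split p i j k n}.
            of_nat (\<alpha> i j k) * ((\<delta> ^^ i) ((\<sigma> ^^ (n - i)) a)) * ((\<delta> ^^ j) ((\<sigma> ^^ k) x)) * ((\<delta> ^^ k) b)))"
proof -
  have p1: "1 < p" by (rule prime_gt_1_nat[OF assms(1)])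
  have s: "skd \<sigma> \<delta>"
  proof -
    have C: "\<And>y. \<sigma> (\<delta> y) = \<delta> (\<sigma> y)" using assms(5) by (metis comp_apply)
    show ?thesis using assms(4) C
      unfolding skd_def skew_derivation_def ring_automorphism_def addf_def by blast
  qed
  have part2: "\<exists>\<alpha> :: nat \<Rightarrow> nat \<Rightarrow> nat \<Rightarrow> nat.
       (\<forall>i j k. digit_split p i j k n \<longrightarrow> 0 < \<alpha> i j k \<and> \<alpha> i j k < p) \<and>
       (\<delta> ^^ n) (a * x * b) =
         (\<Sum>(i, j, k) \<in> {(i, j, k). i \<le> n \<and> j \<le> n \<and> k \<le> n \<and> digit_split p i j k n}.
            of_nat (\<alpha> i j k) * ((\<delta> ^^ i) ((\<sigma> ^^ (n - i)) a)) * ((\<delta> ^^ j) ((\<sigma> ^^ k) x)) * ((\<delta> ^^ k) b))"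
    for a b x :: 'a and n
  proof -
    obtain \<alpha> where A1: "\<forall>t\<in>DS p n. 0 < \<alpha> t \<and> \<alpha> t < p"
      and A2: "(\<delta> ^^ n) (a * x * b) = (\<Sum>t\<in>DS p n. of_nat (\<alpha> t) * trm \<sigma> \<delta> n a x b t)"
      using main[OF assms(1) assms(2), of n a x b] s by blast
    have S: "{(i, j, k). i \<le> n \<and> j \<le> n \<and> k \<le> n \<and> digit_split p i j k n} = DS p n"
    proof (rule set_eqI)
      fix t :: "nat \<times> nat \<times> nat"
      obtain i j k where tt: "t = (i, j, k)" by (cases t) auto
      show "t \<in> {(i, j, k). i \<le> n \<and> j \<le> n \<and> k \<le> n \<and> digit_split p i j k n} \<longleftrightarrow> t \<in> DS p n"
        using part1[OF p1, of i j k n] by (auto simp: tt mem_DS)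
    qed
    show ?thesis
    proof (intro exI[of _ "\<lambda>i j k. \<alpha> (i, j, k)"] conjI allI impI)
      fix i j k assume "digit_split p i j k n"
      then show "0 < \<alpha> (i, j, k)" "\<alpha> (i, j, k) < p" using A1 by (auto simp: mem_DS)
    next
      show "(\<delta> ^^ n) (a * x * b) =
         (\<Sum>(i, j, k) \<in> {(i, j, k). i \<le> n \<and> j \<le> n \<and> k \<le> n \<and> digit_split p i j k n}.
            of_nat (\<alpha> (i, j, k)) * ((\<delta> ^^ i) ((\<sigma> ^^ (n - i)) a)) * ((\<delta> ^^ j) ((\<sigma> ^^ k) x)) * ((\<delta> ^^ k) b))"
        unfolding S A2 by (rule sum.cong[OF refl]) (auto simp: trm_def mult.assoc)
    qed
  qed
  show ?thesis using part1[OF p1] part2 by blast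
qed

end
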